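(* The sequence $\{\rho^m(S(i))\}$, where $i$ ranges over the integers $i\ge 7$ with $i\equiv 3\pmod 4$, is unbounded. In particular, $\rho^m(\mathfrak{N})=\infty$.
   Context: $\mathbb{N}$ denotes the non-negative integers. A numerical semigroup is a submonoid of $(\mathbb{N},+)$ with finite complement; $\mathfrak{N}$ denotes the set of all numerical semigroups. A numerical semigroup is irreducible if it cannot be written as the intersection of two numerical semigroups properly containing it. For an odd integer $j\ge 3$, $T(j)=\{0,\tfrac{j+1}{2},\tfrac{j+1}{2}+1,\dots,j-1\}\cup\{n\in\mathbb{Z}:n\ge j+1\}$. For odd $i\ge5$, $S(i)=\langle 2,i\rangle\cap T(i)$, where $\langle 2,i\rangle=\{2x+iy:x,y\in\mathbb{N}\}$. Given a numerical semigroup $S$ and irreducible numerical semigroups $S_1,\dots,S_n$, the expression $S_1\cap\dots\cap S_n$ is a factorization of $S$ (of length $n$) if $S=S_1\cap\dots\cap S_n$ and $S\neq\bigcap_{j\in J}S_j$ for every nonempty proper subset $J\subsetneq\{1,\dots,n\}$. $\mathsf{L}^m(S)$ is the set of positive integers $n$ such that $S$ has a factorization of length $n$. The elasticity is $\rho^m(S)=\sup\mathsf{L}^m(S)/\min\mathsf{L}^m(S)$, and $\rho^m(\mathfrak{N})=\sup\{\rho^m(S):S\in\mathfrak{N}\}$. *)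

theory Defs
  imports Main "HOL-Library.Extended_Real"
begin

definition numerical_semigroup :: "nat set \<Rightarrow> bool" where
  "numerical_semigroup S \<longleftrightarrow>
     0 \<in> S \<and> (\<forall>x\<in>S. \<forall>y\<in>S. x + y \<in> S) \<and> finite (UNIV - S)"

definition irreducible_ns :: "nat set \<Rightarrow> bool" where
  "irreducible_ns S \<longleftrightarrow> numerical_semigroup S \<and>
     \<not> (\<exists>S1 S2. numerical_semigroup S1 \<and> numerical_semigroup S2 \<and>
              S \<subset> S1 \<and> S \<subset> S2 \<and> S = S1 \<inter> S2)"

definition T_sg :: "nat \<Rightarrow> nat set" where
  "T_sg j = {0} \<union> {(j + 1) div 2 ..< j} \<union> {j + 1 ..}"

definition gen2 :: "nat \<Rightarrow> nat set" where
  "gen2 i = {2 * x + i * y | x y. True}"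

definition S_sg :: "nat \<Rightarrow> nat set" where
  "S_sg i = gen2 i \<inter> T_sg i"

definition is_factorization :: "nat set \<Rightarrow> nat \<Rightarrow> (nat \<Rightarrow> nat set) \<Rightarrow> bool" where
  "is_factorization S n F \<longleftrightarrow> n \<ge> 1 \<and> (\<forall>j<n. irreducible_ns (F j)) \<and>
     S = (\<Inter>j\<in>{..<n}. F j) \<and>
     (\<forall>J. J \<noteq> {} \<and> J \<subset> {..<n} \<longrightarrow> S \<noteq> (\<Inter>j\<in>J. F j))"

definition Lm :: "nat set \<Rightarrow> nat set" where
  "Lm S = {n. n > 0 \<and> (\<exists>F. is_factorization S n F)}"

definition rho_m :: "nat set \<Rightarrow> ereal" where
  "rho_m S = Sup ((\<lambda>n. ereal (real n)) ` Lm S) / ereal (real (Min (Lm S)))"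

definition rho_m_all :: ereal where
  "rho_m_all = Sup (rho_m ` {S. numerical_semigroup S})"

end

theory Submission
  imports Defs
begin

lemma irred_crit:
  assumes ns: "numerical_semigroup S" and fS: "f \<notin> S"
    and big: "\<And>x. x > f \<Longrightarrow> x \<in> S"
    and sym: "\<And>g. g \<notin> S \<Longrightarrow> g \<noteq> f \<Longrightarrow> 2 * g \<noteq> f \<Longrightarrow> f - g \<in> S"
  shows "irreducible_ns S"
proof -
  have key: "f \<in> S1" if ns1: "numerical_semigroup S1" and sub: "S \<subset> S1" for S1
  proof -
    obtain g where g: "g \<in> S1" "g \<notin> S" using sub by blast
    have cl: "\<And>x y. x \<in> S1 \<Longrightarrow> y \<in> S1 \<Longrightarrow> x + y \<in> S1"
      using ns1 unfolding numerical_semigroup_def by blast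
    have "g \<le> f" using big g by (meson not_le)
    show ?thesis
    proof (cases "g = f")
      case True then show ?thesis using g by simp
    next
      case False
      show ?thesis
      proof (cases "2 * g = f")
        case True
        then have "f = g + g" by simp
        then show ?thesis using cl g by simp
      next
        case False2: False
        have "f - g \<in> S1" using sym[OF g(2) False False2] sub by blast
        then have "g + (f - g) \<in> S1" using cl g by blast
        then show ?thesis using \<open>g \<le> f\<close> by simp
      qed
    qed
  qed
  show ?thesis unfolding irreducible_ns_def using ns key fS by blast
qed

lemma mem_T: "x \<in> T_sg p \<longleftrightarrow> x = 0 \<or> ((p+1) div 2 \<le> x \<and> x < p) \<or> p < x"
  by (auto simp: T_sg_def)

lemma mem_gen2: assumes "odd i" shows "x \<in> gen2 i \<longleftrightarrow> even x \<or> i \<le> x"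
proof
  assume "x \<in> gen2 i"
  then obtain a b where "x = 2*a + i*b" by (auto simp: gen2_def)
  then show "even x \<or> i \<le> x"
    by (cases b) (auto simp: trans_le_add2)
next
  assume h: "even x \<or> i \<le> x"
  show "x \<in> gen2 i"
  proof (cases "even x")
    case True
    then obtain a where "x = 2*a" by blast
    then have "x = 2*a + i*0" by simp
    then show ?thesis unfolding gen2_def by blast
  next
    case False
    then have "i \<le> x" using h by simp
    then have "even (x - i)" using False assms by simp
    then obtain a where "x - i = 2*a" by blast
    then have "x = 2*a + i*1" using \<open>i \<le> x\<close> by simp
    then show ?thesis unfolding gen2_def by blast
  qed
qed

lemma mem_S: assumes "odd i"
  shows "x \<in> S_sg i \<longleftrightarrow> x = 0 \<or> (even x \<and> (i+1) div 2 \<le> x \<and> x < i) \<or> i < x"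
  using assms by (auto simp: S_sg_def mem_T mem_gen2)

lemma T_ns: assumes "odd p" shows "numerical_semigroup (T_sg p)"
proof -
  have "UNIV - T_sg p \<subseteq> {..p}" by (auto simp: mem_T)
  then have "finite (UNIV - T_sg p)" using finite_subset by blast
  moreover have "\<forall>x\<in>T_sg p. \<forall>y\<in>T_sg p. x + y \<in> T_sg p"
  proof (intro ballI)
    fix x y assume x: "x \<in> T_sg p" and y: "y \<in> T_sg p"
    have h: "2 * ((p+1) div 2) = p + 1" using assms by simp
    show "x + y \<in> T_sg p"
    proof (cases "x = 0 \<or> y = 0")
      case True then show ?thesis using x y by auto
    next
      case False
      then have "x \<ge> (p+1) div 2" "y \<ge> (p+1) div 2" using x y unfolding mem_T by auto
      then have "p < x + y" using h by linarith
      then show ?thesis unfolding mem_T by simp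
    qed
  qed
  ultimately show ?thesis unfolding numerical_semigroup_def by (simp add: mem_T)
qed

lemma T_irr: assumes "odd p" shows "irreducible_ns (T_sg p)"
  apply (rule irred_crit[OF T_ns[OF assms], of p])
  using assms by (auto simp: mem_T elim!: oddE)

lemma gen2_ns: assumes "odd i" shows "numerical_semigroup (gen2 i)"
proof -
  have "UNIV - gen2 i \<subseteq> {..i}" using assms by (auto simp: mem_gen2)
  then have "finite (UNIV - gen2 i)" using finite_subset by blast
  moreover have "\<forall>x\<in>gen2 i. \<forall>y\<in>gen2 i. x + y \<in> gen2 i"
    using assms by (auto simp: mem_gen2[OF assms])
  ultimately show ?thesis unfolding numerical_semigroup_def by (simp add: mem_gen2[OF assms])
qed

lemma gen2_irr: assumes "odd i" "i \<ge> 3" shows "irreducible_ns (gen2 i)"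
  apply (rule irred_crit[OF gen2_ns[OF assms(1)], of "i - 2"])
proof -
  obtain b where b: "i = 2*b+1" using assms(1) by (auto elim: oddE)
  show "i - 2 \<notin> gen2 i" using b assms unfolding mem_gen2[OF assms(1)] by auto
  show "\<And>x. i - 2 < x \<Longrightarrow> x \<in> gen2 i"
  proof -
    fix x assume "i - 2 < x"
    then have "x = 2*b \<or> i \<le> x" using b by auto
    then show "x \<in> gen2 i" unfolding mem_gen2[OF assms(1)] by auto
  qed
  show "\<And>g. g \<notin> gen2 i \<Longrightarrow> g \<noteq> i - 2 \<Longrightarrow> 2 * g \<noteq> i - 2 \<Longrightarrow> i - 2 - g \<in> gen2 i"
  proof -
    fix g assume g: "g \<notin> gen2 i" "g \<noteq> i - 2"
    then have "odd g" "g < i" unfolding mem_gen2[OF assms(1)] by auto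
    then obtain c where c: "g = 2*c+1" by (auto elim: oddE)
    have "i - 2 - g = 2*(b - 1 - c)" using b c by auto
    then show "i - 2 - g \<in> gen2 i" unfolding mem_gen2[OF assms(1)] by simp
  qed
qed

lemma S_ns: assumes "odd i" shows "numerical_semigroup (S_sg i)"
proof -
  have "UNIV - S_sg i \<subseteq> {..i}" using assms by (auto simp: mem_S)
  then have "finite (UNIV - S_sg i)" using finite_subset by blast
  moreover have "\<forall>x\<in>S_sg i. \<forall>y\<in>S_sg i. x + y \<in> S_sg i"
  proof (intro ballI)
    fix x y assume x: "x \<in> S_sg i" and y: "y \<in> S_sg i"
    have h: "2 * ((i+1) div 2) = i + 1" using assms by simp
    show "x + y \<in> S_sg i"
    proof (cases "x = 0 \<or> y = 0")
      case True then show ?thesis using x y by auto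
    next
      case False
      then have "x \<ge> (i+1) div 2" "y \<ge> (i+1) div 2" using x y unfolding mem_S[OF assms] by auto
      then have "i < x + y" using h by linarith
      then show ?thesis unfolding mem_S[OF assms] by simp
    qed
  qed
  ultimately show ?thesis unfolding numerical_semigroup_def by (simp add: mem_S[OF assms])
qed

lemma nonred:
  assumes "\<And>j. j < n \<Longrightarrow> \<exists>x. x \<notin> F j \<and> (\<forall>l<n. l \<noteq> j \<longrightarrow> x \<in> F l)"
    and "S = (\<Inter>j\<in>{..<n}. F j)"
  shows "\<forall>J. J \<noteq> {} \<and> J \<subset> {..<n} \<longrightarrow> S \<noteq> (\<Inter>j\<in>J. F j)"
proof (intro allI impI)
  fix J assume J: "J \<noteq> {} \<and> J \<subset> {..<n}"
  then obtain j where j: "j < n" "j \<notin> J" by blast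
  obtain x where x: "x \<notin> F j" "\<forall>l<n. l \<noteq> j \<longrightarrow> x \<in> F l" using assms(1)[OF j(1)] by blast
  have "x \<in> (\<Inter>j\<in>J. F j)" using x j J by blast
  moreover have "x \<notin> S" using assms(2) x j by blast
  ultimately show "S \<noteq> (\<Inter>j\<in>J. F j)" by blast
qed

lemma Lm_finite:
  assumes "numerical_semigroup S" shows "finite (Lm S)"
proof -
  define C where "C = {T. S \<subseteq> T}"
  have "C \<subseteq> (\<lambda>G. UNIV - G) ` Pow (UNIV - S)"
  proof
    fix T assume "T \<in> C"
    then have "T = UNIV - (UNIV - T)" "UNIV - T \<in> Pow (UNIV - S)" by (auto simp: C_def)
    then show "T \<in> (\<lambda>G. UNIV - G) ` Pow (UNIV - S)" by blast
  qed
  moreover have "finite (UNIV - S)" using assms by (simp add: numerical_semigroup_def)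
  ultimately have fC: "finite C" by (meson finite_Pow_iff finite_imageI finite_subset)
  have "Lm S \<subseteq> {..card C}"
  proof
    fix n assume "n \<in> Lm S"
    then obtain F where F: "is_factorization S n F" by (auto simp: Lm_def)
    have inj: "inj_on F {..<n}"
    proof (rule inj_onI, rule ccontr)
      fix j l assume jl: "j \<in> {..<n}" "l \<in> {..<n}" "F j = F l" "j \<noteq> l"
      define J where "J = {..<n} - {l}"
      have "J \<noteq> {} \<and> J \<subset> {..<n}" using jl by (auto simp: J_def)
      moreover have "(\<Inter>k\<in>{..<n}. F k) = (\<Inter>k\<in>J. F k)"
      proof -
        have "{..<n} = insert l J" using jl by (auto simp: J_def)
        moreover have "F l \<supseteq> (\<Inter>k\<in>J. F k)" using jl by (auto simp: J_def)
        ultimately show ?thesis by auto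
      qed
      ultimately show False using F unfolding is_factorization_def by metis
    qed
    have "F ` {..<n} \<subseteq> C" using F unfolding is_factorization_def C_def by auto
    then have "card (F ` {..<n}) \<le> card C" using fC card_mono by blast
    then show "n \<in> {..card C}" using card_image[OF inj] by simp
  qed
  then show ?thesis using finite_subset by blast
qed

lemma rho_bound:
  assumes "numerical_semigroup S" "N \<in> Lm S" "2 \<in> Lm S"
  shows "rho_m S \<ge> ereal (real N / 2)"
proof -
  have fin: "finite (Lm S)" using Lm_finite[OF assms(1)] .
  define m where "m = Min (Lm S)"
  have "m \<in> Lm S" unfolding m_def using fin assms(3) by (intro Min_in) auto
  then have m1: "m > 0" by (simp add: Lm_def)
  have m2: "m \<le> 2" using fin assms(3) unfolding m_def by simp
  have "ereal (real N) \<le> Sup ((\<lambda>n. ereal (real n)) ` Lm S)"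
    using assms(2) by (simp add: Sup_upper)
  then have "ereal (real N) / ereal (real m) \<le> Sup ((\<lambda>n. ereal (real n)) ` Lm S) / ereal (real m)"
    by (rule ereal_divide_right_mono) (use m1 in simp)
  then have "ereal (real N) / ereal (real m) \<le> rho_m S"
    unfolding rho_m_def m_def[symmetric] .
  moreover have "ereal (real N) / ereal (real m) = ereal (real N / real m)"
    using m1 by simp
  moreover have "real N / 2 \<le> real N / real m" using m1 m2
    by (intro divide_left_mono) auto
  ultimately show ?thesis by (metis ereal_less_eq(3) order_trans)
qed

lemma long_fact:
  assumes "k \<ge> 1"
  shows "k + 1 \<in> Lm (S_sg (4*k+3))"
proof -
  define i where "i = 4*k+3"
  have oi: "odd i" unfolding i_def by simp
  define F where "F = (\<lambda>j. T_sg (2*k+3+2*j))"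
  have eq: "S_sg i = (\<Inter>j\<in>{..<k+1}. F j)"
  proof (rule set_eqI)
    fix x
    show "x \<in> S_sg i \<longleftrightarrow> x \<in> (\<Inter>j\<in>{..<k+1}. F j)"
    proof
      assume xs: "x \<in> S_sg i"
      show "x \<in> (\<Inter>j\<in>{..<k+1}. F j)"
      proof
        fix j assume "j \<in> {..<k+1}"
        then have j: "j < k+1" by simp
        have d: "(2*k+3+2*j+1) div 2 = k+2+j" by simp
        from xs have "x = 0 \<or> (even x \<and> 2*k+2 \<le> x \<and> x < i) \<or> i < x"
          unfolding mem_S[OF oi] by (simp add: i_def)
        moreover have "even x \<Longrightarrow> x \<noteq> 2*k+3+2*j" by auto
        ultimately show "x \<in> F j" unfolding F_def mem_T d using j
          unfolding i_def by auto
      qed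
    next
      assume h: "x \<in> (\<Inter>j\<in>{..<k+1}. F j)"
      have hk: "x \<in> T_sg i" using h[THEN INT_D, of k] by (simp add: F_def i_def)
      show "x \<in> S_sg i"
      proof (rule ccontr)
        assume ns: "x \<notin> S_sg i"
        have d: "(4*k+3+1) div 2 = 2*k+2" by simp
        from hk have "x=0 \<or> (2*k+2 \<le> x \<and> x < i) \<or> i < x" unfolding mem_T i_def d by simp
        moreover have "\<not> (x = 0 \<or> (even x \<and> 2*k+2 \<le> x \<and> x < i) \<or> i < x)"
          using ns unfolding mem_S[OF oi] by (simp add: i_def)
        ultimately have "odd x" "2*k+2 \<le> x" "x < i" by auto
        then have "2*k+3 \<le> x" by (metis Suc_eq_plus1 add_Suc_right dvd_triv_left even_add le_antisym
            not_less_eq_eq numeral_2_eq_2 numeral_3_eq_3 add_2_eq_Suc' )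
        obtain c where c: "x = 2*c+1" using \<open>odd x\<close> by (auto elim: oddE)
        define j where "j = c - (k+1)"
        have j: "x = 2*k+3+2*j" "j < k+1" using c \<open>2*k+3 \<le> x\<close> \<open>x < i\<close>
          unfolding j_def i_def by auto
        have "x \<notin> F j" using j by (simp add: F_def mem_T)
        then show False using h j by blast
      qed
    qed
  qed
  have "is_factorization (S_sg i) (k+1) F"
    unfolding is_factorization_def
  proof (intro conjI)
    show "\<forall>j<k+1. irreducible_ns (F j)" unfolding F_def by (auto intro: T_irr)
    show "S_sg i = (\<Inter>j\<in>{..<k+1}. F j)" by (rule eq)
    show "\<forall>J. J \<noteq> {} \<and> J \<subset> {..<k+1} \<longrightarrow> S_sg i \<noteq> (\<Inter>j\<in>J. F j)"
    proof (rule nonred[OF _ eq])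
      fix j assume "j < k+1"
      then show "\<exists>x. x \<notin> F j \<and> (\<forall>l<k+1. l \<noteq> j \<longrightarrow> x \<in> F l)"
        by (intro exI[of _ "2*k+3+2*j"]) (auto simp: F_def mem_T)
    qed
  qed simp
  then show ?thesis unfolding Lm_def i_def by auto
qed

lemma short_fact:
  assumes "k \<ge> 1"
  shows "2 \<in> Lm (S_sg (4*k+3))"
proof -
  define i where "i = 4*k+3"
  have oi: "odd i" unfolding i_def by simp
  define F where "F = (\<lambda>j::nat. if j = 0 then gen2 i else T_sg i)"
  have lt: "{..<2::nat} = {0,1}" by auto
  have eq: "S_sg i = (\<Inter>j\<in>{..<2}. F j)"
    unfolding lt F_def S_sg_def by auto
  have "is_factorization (S_sg i) 2 F"
    unfolding is_factorization_def
  proof (intro conjI)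
    show "\<forall>j<2. irreducible_ns (F j)" unfolding F_def using oi
      by (auto intro: T_irr gen2_irr simp: i_def)
    show "S_sg i = (\<Inter>j\<in>{..<2}. F j)" by (rule eq)
    show "\<forall>J. J \<noteq> {} \<and> J \<subset> {..<2} \<longrightarrow> S_sg i \<noteq> (\<Inter>j\<in>J. F j)"
    proof (rule nonred[OF _ eq])
      fix j :: nat assume j: "j < 2"
      show "\<exists>x. x \<notin> F j \<and> (\<forall>l<2. l \<noteq> j \<longrightarrow> x \<in> F l)"
      proof (cases "j = 0")
        case True
        then show ?thesis using oi assms
          by (intro exI[of _ "2*k+3"]) (auto simp: F_def mem_T mem_gen2 i_def)
      next
        case False
        then have "j = 1" using j by simp
        then show ?thesis using oi assms
          by (intro exI[of _ "2"]) (auto simp: F_def mem_T mem_gen2 i_def)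
      qed
    qed
  qed simp
  then show ?thesis unfolding Lm_def i_def by auto
qed

theorem corollary2p4:
  shows "(\<forall>B::real. \<exists>i::nat. i \<ge> 7 \<and> i mod 4 = 3 \<and> rho_m (S_sg i) > ereal B)
         \<and> rho_m_all = \<infinity>"
proof -
  have A: "\<exists>i::nat. i \<ge> 7 \<and> i mod 4 = 3 \<and> rho_m (S_sg i) > ereal B" for B :: real
  proof -
    define k where "k = nat \<lceil>2 * \<bar>B\<bar>\<rceil> + 1"
    have k1: "k \<ge> 1" by (simp add: k_def)
    have "real (nat \<lceil>2 * \<bar>B\<bar>\<rceil>) \<ge> 2 * \<bar>B\<bar>" by (rule real_nat_ceiling_ge)
    then have "real k \<ge> 2 * \<bar>B\<bar> + 1" unfolding k_def by simp
    moreover have "B \<le> \<bar>B\<bar>" by simp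
    ultimately have lt: "B < real (k+1) / 2" by simp
    have ns: "numerical_semigroup (S_sg (4*k+3))" by (rule S_ns) simp
    have "ereal (real (k+1) / 2) \<le> rho_m (S_sg (4*k+3))"
      by (rule rho_bound[OF ns long_fact[OF k1] short_fact[OF k1]])
    moreover have "ereal B < ereal (real (k+1) / 2)" using lt by simp
    ultimately have "ereal B < rho_m (S_sg (4*k+3))" using less_le_trans by blast
    moreover have "4*k+3 \<ge> 7" "(4*k+3) mod 4 = 3" using k1 by auto
    ultimately show ?thesis by blast
  qed
  have "rho_m_all = \<infinity>"
  proof (rule ereal_top)
    fix B
    obtain i where i: "i \<ge> 7" "i mod 4 = 3" "rho_m (S_sg i) > ereal B" using A by blast
    have "odd i" using i(2) by presburger
    then have "S_sg i \<in> {S. numerical_semigroup S}" by (simp add: S_ns)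
    then have "rho_m (S_sg i) \<le> rho_m_all" unfolding rho_m_all_def by (rule Sup_upper[OF imageI])
    then show "ereal B \<le> rho_m_all" using i(3) by simp
  qed
  then show ?thesis using A by blast
qed

end
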